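(* Let $\Pi$ be a group and let $T$ be a function on $\Pi$ with values in an integral domain whose characteristic is not $2$. Then the following two sets of relations are equivalent: (P): (P1) $T(1)=2$; (P2) $T(g_1g_2)=T(g_2g_1)$; (P3) $T(g_1)T(g_2)T(g_3)+T(g_1g_2g_3)+T(g_1g_3g_2)-T(g_1g_2)T(g_3)-T(g_2g_3)T(g_1)-T(g_1g_3)T(g_2)=0$; (P4) $T(g)^2-T(g^2)=2$, for all $g,g_1,g_2,g_3\in\Pi$; (C): (C1) $T(1)=2$; (C2) $T(g_1)T(g_2)=T(g_1g_2)+T(g_1^{-1}g_2)$, for all $g_1,g_2\in\Pi$. *)

theory Defs
  imports "HOL-Algebra.Group"
begin

definition rel_P :: "('g, 'm) monoid_scheme \<Rightarrow> ('g \<Rightarrow> 'b::idom) \<Rightarrow> bool" where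
  "rel_P G T \<longleftrightarrow>
     T \<one>\<^bsub>G\<^esub> = 2
   \<and> (\<forall>g1\<in>carrier G. \<forall>g2\<in>carrier G. T (g1 \<otimes>\<^bsub>G\<^esub> g2) = T (g2 \<otimes>\<^bsub>G\<^esub> g1))
   \<and> (\<forall>g1\<in>carrier G. \<forall>g2\<in>carrier G. \<forall>g3\<in>carrier G.
        T g1 * T g2 * T g3 + T (g1 \<otimes>\<^bsub>G\<^esub> g2 \<otimes>\<^bsub>G\<^esub> g3) + T (g1 \<otimes>\<^bsub>G\<^esub> g3 \<otimes>\<^bsub>G\<^esub> g2)
        - T (g1 \<otimes>\<^bsub>G\<^esub> g2) * T g3 - T (g2 \<otimes>\<^bsub>G\<^esub> g3) * T g1 - T (g1 \<otimes>\<^bsub>G\<^esub> g3) * T g2 = 0)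
   \<and> (\<forall>g\<in>carrier G. (T g)^2 - T (g \<otimes>\<^bsub>G\<^esub> g) = 2)"

definition rel_C :: "('g, 'm) monoid_scheme \<Rightarrow> ('g \<Rightarrow> 'b::idom) \<Rightarrow> bool" where
  "rel_C G T \<longleftrightarrow>
     T \<one>\<^bsub>G\<^esub> = 2
   \<and> (\<forall>g1\<in>carrier G. \<forall>g2\<in>carrier G.
        T g1 * T g2 = T (g1 \<otimes>\<^bsub>G\<^esub> g2) + T (inv\<^bsub>G\<^esub> g1 \<otimes>\<^bsub>G\<^esub> g2))"

end

theory Submission
  imports Defs
begin

lemma P_to_C:
  fixes G :: "('g, 'm) monoid_scheme" (structure) and T :: "'g \<Rightarrow> 'b::idom"
  assumes G: "group G" and two: "(2::'b) \<noteq> 0" and P: "rel_P G T"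
  shows "rel_C G T"
proof -
  interpret group G by (rule G)
  have P1: "T \<one> = 2" and P2: "\<And>a b. a \<in> carrier G \<Longrightarrow> b \<in> carrier G \<Longrightarrow> T (a \<otimes> b) = T (b \<otimes> a)"
    and P3: "\<And>g1 g2 g3. g1 \<in> carrier G \<Longrightarrow> g2 \<in> carrier G \<Longrightarrow> g3 \<in> carrier G \<Longrightarrow>
        T g1 * T g2 * T g3 + T (g1 \<otimes> g2 \<otimes> g3) + T (g1 \<otimes> g3 \<otimes> g2)
        - T (g1 \<otimes> g2) * T g3 - T (g2 \<otimes> g3) * T g1 - T (g1 \<otimes> g3) * T g2 = 0"
    and P4: "\<And>g. g \<in> carrier G \<Longrightarrow> (T g)^2 - T (g \<otimes> g) = 2"
    using P unfolding rel_P_def by auto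
  have "T x * T z = T (x \<otimes> z) + T (inv x \<otimes> z)" if x: "x \<in> carrier G" and z: "z \<in> carrier G" for x z
  proof -
    define w where "w = inv x \<otimes> z"
    have w: "w \<in> carrier G" using x z by (simp add: w_def)
    have e1: "x \<otimes> w = z" using x z by (simp add: w_def m_assoc[symmetric])
    have e2: "x \<otimes> x \<otimes> w = x \<otimes> z" using x w by (simp add: m_assoc e1)
    have e3: "x \<otimes> w \<otimes> x = z \<otimes> x" using e1 by simp
    have e4: "T (z \<otimes> x) = T (x \<otimes> z)" using P2 x z by simp
    have h: "T x * T x * T w + T (x \<otimes> z) + T (x \<otimes> z) - T (x \<otimes> x) * T w - T z * T x - T z * T x = 0"
      using P3[OF x x w] e1 e2 e3 e4 by simp
    have h4: "T (x \<otimes> x) = (T x)^2 - 2" using P4[OF x] by (simp add: algebra_simps)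
    have "2 * (T w + T (x \<otimes> z) - T x * T z) = 0"
      using h unfolding h4 by (simp add: algebra_simps power2_eq_square)
    then have "T w + T (x \<otimes> z) - T x * T z = 0" using two mult_eq_0_iff by blast
    then show ?thesis by (simp add: w_def algebra_simps)
  qed
  then show ?thesis unfolding rel_C_def using P1 by auto
qed

lemma C_to_P:
  fixes G :: "('g, 'm) monoid_scheme" (structure) and T :: "'g \<Rightarrow> 'b::idom"
  assumes G: "group G" and C: "rel_C G T"
  shows "rel_P G T"
proof -
  interpret group G by (rule G)
  have C1: "T \<one> = 2" using C unfolding rel_C_def by blast
  have C2: "T a * T b = T (a \<otimes> b) + T (inv a \<otimes> b)" if "a \<in> carrier G" "b \<in> carrier G" for a b
    using C that unfolding rel_C_def by blast
  have Tinv: "T (inv a) = T a" if a: "a \<in> carrier G" for a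
  proof -
    have "T a * T \<one> = T (a \<otimes> \<one>) + T (inv a \<otimes> \<one>)" using C2[OF a one_closed] .
    then have "T a * 2 = T a + T (inv a)" using a C1 by simp
    then show ?thesis by (simp add: mult_2_right)
  qed
  have comm: "T (a \<otimes> b) = T (b \<otimes> a)" if a: "a \<in> carrier G" and b: "b \<in> carrier G" for a b
  proof -
    have "inv (inv a \<otimes> b) = inv b \<otimes> a" using a b by (simp add: inv_mult_group)
    then have e: "T (inv b \<otimes> a) = T (inv a \<otimes> b)"
      using Tinv[of "inv a \<otimes> b"] a b by simp
    have "T a * T b = T (a \<otimes> b) + T (inv a \<otimes> b)" using C2[OF a b] .
    moreover have "T b * T a = T (b \<otimes> a) + T (inv b \<otimes> a)" using C2[OF b a] .
    ultimately show ?thesis using e by algebra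
  qed
  have P3: "T a * T b * T c + T (a \<otimes> b \<otimes> c) + T (a \<otimes> c \<otimes> b)
        - T (a \<otimes> b) * T c - T (b \<otimes> c) * T a - T (a \<otimes> c) * T b = 0"
    if a: "a \<in> carrier G" and b: "b \<in> carrier G" and c: "c \<in> carrier G" for a b c
  proof -
    have E3: "T b * T c = T (b \<otimes> c) + T (inv b \<otimes> c)" using C2 b c by blast
    have E4: "T a * T (inv b \<otimes> c) = T (a \<otimes> (inv b \<otimes> c)) + T (inv a \<otimes> (inv b \<otimes> c))"
      using C2 a b c by simp
    have E5: "T (a \<otimes> (inv b \<otimes> c)) = T (c \<otimes> a \<otimes> inv b)"
      using comm[of a "inv b \<otimes> c"] comm[of "c \<otimes> a" "inv b"] a b c by (simp add: m_assoc)
    have E6: "T (c \<otimes> a) * T b = T (c \<otimes> a \<otimes> b) + T (inv (c \<otimes> a) \<otimes> b)" using C2 a b c by simp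
    have E6a: "T (inv (c \<otimes> a) \<otimes> b) = T (c \<otimes> a \<otimes> inv b)"
    proof -
      have "inv (c \<otimes> a) \<otimes> b = inv (inv b \<otimes> (c \<otimes> a))" using a b c by (simp add: inv_mult_group)
      then have "T (inv (c \<otimes> a) \<otimes> b) = T (inv b \<otimes> (c \<otimes> a))" using Tinv a b c by simp
      also have "\<dots> = T (c \<otimes> a \<otimes> inv b)" by (rule comm) (use a b c in auto)
      finally show ?thesis .
    qed
    have E7: "T (inv a \<otimes> (inv b \<otimes> c)) = T (b \<otimes> a \<otimes> inv c)"
    proof -
      have "inv a \<otimes> (inv b \<otimes> c) = inv (inv c \<otimes> (b \<otimes> a))"
        using a b c by (simp add: inv_mult_group m_assoc)
      then have "T (inv a \<otimes> (inv b \<otimes> c)) = T (inv c \<otimes> (b \<otimes> a))" using Tinv a b c by simp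
      also have "\<dots> = T (b \<otimes> a \<otimes> inv c)" by (rule comm) (use a b c in auto)
      finally show ?thesis .
    qed
    have E8: "T (b \<otimes> a) * T c = T (b \<otimes> a \<otimes> c) + T (inv (b \<otimes> a) \<otimes> c)" using C2 a b c by simp
    have E8a: "T (inv (b \<otimes> a) \<otimes> c) = T (b \<otimes> a \<otimes> inv c)"
    proof -
      have "inv (b \<otimes> a) \<otimes> c = inv (inv c \<otimes> (b \<otimes> a))" using a b c by (simp add: inv_mult_group)
      then have "T (inv (b \<otimes> a) \<otimes> c) = T (inv c \<otimes> (b \<otimes> a))" using Tinv a b c by simp
      also have "\<dots> = T (b \<otimes> a \<otimes> inv c)" by (rule comm) (use a b c in auto)
      finally show ?thesis .
    qed
    have F1: "T (c \<otimes> a \<otimes> b) = T (a \<otimes> b \<otimes> c)" using comm[of c "a \<otimes> b"] a b c by (simp add: m_assoc)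
    have F2: "T (c \<otimes> a) = T (a \<otimes> c)" using comm a c by simp
    have F3: "T (b \<otimes> a) = T (a \<otimes> b)" using comm a b by simp
    have F4: "T (b \<otimes> a \<otimes> c) = T (a \<otimes> c \<otimes> b)" using comm[of b "a \<otimes> c"] a b c by (simp add: m_assoc)
    show ?thesis using E3 E4 E5 E6 E6a E7 E8 E8a F1 F2 F3 F4 by algebra
  qed
  have P4: "(T g)^2 - T (g \<otimes> g) = 2" if g: "g \<in> carrier G" for g
  proof -
    have "T g * T g = T (g \<otimes> g) + T (inv g \<otimes> g)" using C2[OF g g] .
    then show ?thesis using g C1 by (simp add: power2_eq_square)
  qed
  show ?thesis unfolding rel_P_def using C1 comm P3 P4 by blast
qed

theorem lemma3p2p2:
  fixes G :: "('g, 'm) monoid_scheme" and T :: "'g \<Rightarrow> 'b::idom"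
  assumes "group G"
    and "(2::'b) \<noteq> 0"
  shows "rel_P G T \<longleftrightarrow> rel_C G T"
  using P_to_C C_to_P assms by blast

end
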